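(* Let $R>0$, let $\mathcal K$ be a nonempty closed subset of $S^{d-1}$ contained in a hemisphere $\{v\in S^{d-1}:\langle v,w\rangle\ge0\}$ for some $w\in S^{d-1}$, and let $\mathcal N=\mathrm{Nor}(C_{\mathcal K},o)\cap S^{d-1}$. The following are equivalent: (a) $\mathcal K$ is spherically convex; (b) $\mathrm{reach}(C_{\mathcal K})\ge R$; (c) $C_{\mathcal K}=C_{\mathcal N}$.
   Context: $S^{d-1}$ is the unit sphere, $o$ the origin, $B(x)=\{y:|y-x|<R\}$, $co(\cdot)$ the convex hull. For $\mathcal K\subset S^{d-1}$, $C_{\mathcal K}=\bigcap_{v\in\mathcal K}(\mathbb{R}^d\setminus B(Rv))$ is the $R$-cone with vertex $o$. With $K=\{\lambda v:\lambda\ge0,v\in\mathcal K\}$, the spherical convex hull is $co_{sph}(\mathcal K)=co(K)\cap S^{d-1}$, and $\mathcal K$ is spherically convex if $co_{sph}(\mathcal K)=\mathcal K$. Tangent cone: $\mathrm{Tan}(A,q)=\{v: \forall\varepsilon>0\ \exists x\in A,\ |x-q|<\varepsilon,\ \exists r>0,\ |r(x-q)-v|<\varepsilon\}$; normal cone: $\mathrm{Nor}(A,q)=\{u:\langle u,v\rangle\le0\ \forall v\in\mathrm{Tan}(A,q)\}$. $\mathrm{Unp}(A)$ is the set of points with a unique nearest point in $A$; $\mathrm{reach}(A,a)=\sup\{\rho>0:\{x:|x-a|<\rho\}\subset\mathrm{Unp}(A)\}$, $\mathrm{reach}(A)=\inf_{a\in A}\mathrm{reach}(A,a)$. *)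

theory Defs
  imports "HOL-Analysis.Analysis"
begin

definition Rcone :: "real \<Rightarrow> 'a::euclidean_space set \<Rightarrow> 'a set" where
  "Rcone R K = (\<Inter>v\<in>K. UNIV - ball (R *\<^sub>R v) R)"

definition gen_cone :: "'a::euclidean_space set \<Rightarrow> 'a set" where
  "gen_cone K = {t *\<^sub>R v | t v. t \<ge> 0 \<and> v \<in> K}"

definition co_sph :: "'a::euclidean_space set \<Rightarrow> 'a set" where
  "co_sph K = convex hull (gen_cone K) \<inter> sphere 0 1"

definition sph_convex :: "'a::euclidean_space set \<Rightarrow> bool" where
  "sph_convex K \<longleftrightarrow> co_sph K = K"

definition Tan :: "'a::euclidean_space set \<Rightarrow> 'a \<Rightarrow> 'a set" where
  "Tan A q = {v. \<forall>\<epsilon>>0. \<exists>x\<in>A. norm (x - q) < \<epsilon> \<and> (\<exists>r>0. norm (r *\<^sub>R (x - q) - v) < \<epsilon>)}"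

definition Nor :: "'a::euclidean_space set \<Rightarrow> 'a \<Rightarrow> 'a set" where
  "Nor A q = {u. \<forall>v\<in>Tan A q. inner u v \<le> 0}"

definition Unp :: "'a::euclidean_space set \<Rightarrow> 'a set" where
  "Unp A = {x. \<exists>!a. a \<in> A \<and> (\<forall>b\<in>A. dist x a \<le> dist x b)}"

text \<open>Reach, valued in the extended reals (may be infinite; sup of the empty set is -\<infinity>).\<close>
definition reach_at :: "'a::euclidean_space set \<Rightarrow> 'a \<Rightarrow> ereal" where
  "reach_at A a = (SUP \<rho>\<in>{\<rho>. \<rho> > 0 \<and> ball a \<rho> \<subseteq> Unp A}. ereal \<rho>)"

definition reach :: "'a::euclidean_space set \<Rightarrow> ereal" where
  "reach A = (INF a\<in>A. reach_at A a)"

end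

theory Submission
  imports Defs
begin


lemma nds: fixes x y :: "'a::real_inner"
  shows "(norm (x - y))^2 = (norm x)^2 - 2 * inner x y + (norm y)^2"
  by (simp add: power2_norm_eq_inner inner_diff_left inner_diff_right inner_commute)

lemma mem_Rcone':
  fixes K :: "'a::euclidean_space set"
  shows "x \<in> Rcone R K \<longleftrightarrow> (\<forall>k\<in>K. R \<le> norm (x - R *\<^sub>R k))"
  unfolding Rcone_def by (simp add: dist_norm norm_minus_commute not_less)

lemma mem_Rcone:
  fixes K :: "'a::euclidean_space set"
  assumes R: "R > 0" and Ks: "K \<subseteq> sphere 0 1"
  shows "x \<in> Rcone R K \<longleftrightarrow> (\<forall>k\<in>K. 2 * R * inner x k \<le> (norm x)^2)"
proof -
  have "R \<le> norm (x - R *\<^sub>R k) \<longleftrightarrow> 2 * R * inner x k \<le> (norm x)^2" if "k \<in> K" for k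
  proof -
    have nk: "norm k = 1" using Ks that by auto
    have "(norm (x - R *\<^sub>R k))^2 = (norm x)^2 - 2 * R * inner x k + R^2"
      by (simp add: nds nk power_mult_distrib)
    moreover have "R \<le> norm (x - R *\<^sub>R k) \<longleftrightarrow> R^2 \<le> (norm (x - R *\<^sub>R k))^2"
      using R by (smt (verit) norm_ge_zero power_mono power2_le_imp_le)
    ultimately show ?thesis by linarith
  qed
  then show ?thesis
    unfolding mem_Rcone' by blast
qed

lemma hull_sphere:
  fixes K :: "'a::euclidean_space set"
  assumes Ks: "K \<subseteq> sphere 0 1"
  shows "convex hull (insert 0 K) \<inter> sphere 0 1 \<subseteq> K"
proof -
  let ?T = "K \<union> ball 0 1"
  have cT: "convex ?T"
    unfolding convex_alt
  proof (intro ballI allI impI)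
    fix x y and u :: real assume x: "x \<in> ?T" and y: "y \<in> ?T" and u: "0 \<le> u \<and> u \<le> 1"
    have nx: "norm x \<le> 1" and ny: "norm y \<le> 1" using x y Ks by auto
    show "(1 - u) *\<^sub>R x + u *\<^sub>R y \<in> ?T"
    proof (cases "u = 0 \<or> u = 1 \<or> x = y")
      case True
      then show ?thesis using x y by (auto simp: algebra_simps simp flip: scaleR_add_left)
    next
      case False
      have le: "norm ((1 - u) *\<^sub>R x + u *\<^sub>R y) \<le> (1-u) * norm x + u * norm y"
        using norm_triangle_ineq[of "(1 - u) *\<^sub>R x" "u *\<^sub>R y"] u by simp
      also have "\<dots> \<le> 1" using nx ny u
        by (smt (verit, best) mult_left_le)
      finally have le1: "norm ((1 - u) *\<^sub>R x + u *\<^sub>R y) \<le> 1" .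
      have "norm ((1 - u) *\<^sub>R x + u *\<^sub>R y) \<noteq> 1"
      proof
        assume eq: "norm ((1 - u) *\<^sub>R x + u *\<^sub>R y) = 1"
        have u01: "0 < u" "u < 1" using False u by auto
        have "(1-u) * norm x + u * norm y = 1" using le eq \<open>(1-u) * norm x + u * norm y \<le> 1\<close> by linarith
        moreover have "(1-u) * norm x \<le> (1-u)" "u * norm y \<le> u"
          using nx ny u01 by (simp_all add: mult_left_le)
        moreover have "norm x < 1 \<Longrightarrow> (1-u) * norm x < (1-u)"
          using u01 by simp
        moreover have "norm y < 1 \<Longrightarrow> u * norm y < u"
          using u01 by simp
        ultimately have n1: "norm x = 1" "norm y = 1" using nx ny by linarith+
        have "norm ((1 - u) *\<^sub>R x + u *\<^sub>R y) = norm ((1 - u) *\<^sub>R x) + norm (u *\<^sub>R y)"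
          using eq n1 u01 by simp
        then have "norm ((1 - u) *\<^sub>R x) *\<^sub>R (u *\<^sub>R y) = norm (u *\<^sub>R y) *\<^sub>R ((1 - u) *\<^sub>R x)"
          using norm_triangle_eq by blast
        then have "((1-u) * u) *\<^sub>R y = ((1-u) * u) *\<^sub>R x" using n1 u01 by (simp add: mult.commute)
        then have "x = y" using u01 by simp
        then show False using False by simp
      qed
      then show ?thesis using le1 by auto
    qed
  qed
  have "insert 0 K \<subseteq> ?T" by auto
  then have "convex hull (insert 0 K) \<subseteq> ?T" using cT by (simp add: hull_minimal)
  then show ?thesis by auto
qed



lemma sub_co_sph:
  fixes K :: "'a::euclidean_space set"
  assumes "K \<subseteq> sphere 0 1"
  shows "K \<subseteq> co_sph K"
proof
  fix v assume v: "v \<in> K"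
  have "v \<in> gen_cone K" unfolding gen_cone_def
    by (rule CollectI, rule exI[of _ 1], rule exI[of _ v]) (simp add: v)
  then have "v \<in> convex hull gen_cone K" by (rule hull_inc)
  then show "v \<in> co_sph K" using assms v unfolding co_sph_def by auto
qed

lemma arc_in:
  fixes K :: "'a::euclidean_space set"
  assumes sc: "sph_convex K" and v: "v \<in> K" and k: "k \<in> K" and l: "0 \<le> l" "l \<le> 1"
    and w: "(1-l) *\<^sub>R v + l *\<^sub>R k \<noteq> 0"
  shows "(1 / norm ((1-l) *\<^sub>R v + l *\<^sub>R k)) *\<^sub>R ((1-l) *\<^sub>R v + l *\<^sub>R k) \<in> K"
proof -
  let ?w = "(1-l) *\<^sub>R v + l *\<^sub>R k"
  let ?c = "1 / norm ?w"
  have c: "?c \<ge> 0" by simp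
  have g: "?c *\<^sub>R v \<in> gen_cone K" "?c *\<^sub>R k \<in> gen_cone K"
    unfolding gen_cone_def using v k c by blast+
  have "(1-l) *\<^sub>R (?c *\<^sub>R v) + l *\<^sub>R (?c *\<^sub>R k) \<in> convex hull gen_cone K"
    using l by (intro convexD[OF convex_convex_hull] hull_inc g) auto
  moreover have "(1-l) *\<^sub>R (?c *\<^sub>R v) + l *\<^sub>R (?c *\<^sub>R k) = ?c *\<^sub>R ?w"
    by (simp only: scaleR_add_right scaleR_scaleR mult.commute)
  moreover have "norm (?c *\<^sub>R ?w) = 1" using w by simp
  ultimately have "?c *\<^sub>R ?w \<in> co_sph K" unfolding co_sph_def by auto
  then show ?thesis using sc unfolding sph_convex_def by simp
qed

lemma lim_aux:
  fixes A E :: real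
  assumes h: "\<And>l. 0 < l \<Longrightarrow> l < 1 \<Longrightarrow> A \<le> -E + l * E" and E: "E \<ge> 0"
  shows "A \<le> -E"
proof (rule ccontr)
  assume n: "\<not> A \<le> -E"
  show False
  proof (cases "E = 0")
    case True then show False using h[of "1/2"] n by simp
  next
    case False
    then have E0: "E > 0" using E by simp
    define l where "l = min (1/2) ((A+E)/(2*E))"
    have l0: "0 < l" "l < 1" using n E0 unfolding l_def by auto
    have "l * E \<le> (A+E)/(2*E) * E" unfolding l_def using E0 by (intro mult_right_mono) auto
    also have "\<dots> = A/2 + E/2" using E0 by simp
    finally have "l * E \<le> A/2 + E/2" .
    then show False using h[OF l0] n by linarith
  qed
qed

lemma key_ineq:
  fixes K :: "'a::euclidean_space set"
  assumes sc: "sph_convex K" and Ks: "K \<subseteq> sphere 0 1" and v: "v \<in> K" and k: "k \<in> K"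
    and vmax: "\<forall>k'\<in>K. inner x k' \<le> inner x v" and X0: "inner x v \<ge> 0"
  shows "inner x k - inner x v \<le> (inner v k - 1) * inner x v"
proof -
  have nv: "norm v = 1" and nk: "norm k = 1" using Ks v k by auto
  have vv: "inner v v = 1" and kk: "inner k k = 1" using nv nk by (metis power2_norm_eq_inner power_one)+
  show ?thesis
  proof (cases "k = - v")
    case True then show ?thesis using nv by (simp add: inner_minus_right power2_norm_eq_inner [symmetric])
  next
    case False
    define c where "c = inner v k"
    define X where "X = inner x v"
    define A where "A = inner x k - X"
    define E where "E = (1 - c) * X"
    have c1: "c \<le> 1" using norm_cauchy_schwarz[of v k] nv nk unfolding c_def by simp
    have cm: "c \<ge> -1" using norm_cauchy_schwarz[of v "-k"] nv nk unfolding c_def by (simp add: inner_minus_right)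
    have "(norm (v + k))^2 = 2 + 2 * c"
      using vv kk unfolding c_def by (simp add: power2_norm_eq_inner inner_add_left inner_add_right inner_commute)
    moreover have "v + k \<noteq> 0" using False by (metis add.commute add_eq_0_iff)
    ultimately have cne: "c > -1" using cm by (smt (verit) zero_less_norm_iff zero_less_power)
    have E0: "E \<ge> 0" unfolding E_def X_def using c1 X0 by simp
    have step: "A \<le> - E + l * E" if l: "0 < l" "l < 1" for l
    proof -
      let ?w = "(1-l) *\<^sub>R v + l *\<^sub>R k"
      define e where "e = l * (1-l) * (1-c)"
      have nw2: "(norm ?w)^2 = 1 - 2 * e"
        using vv kk unfolding e_def c_def
        by (simp add: power2_norm_eq_inner inner_add_left inner_add_right inner_commute algebra_simps)
      have "0 \<le> (l - 1/2)^2" by simp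
      then have l4: "l * (1-l) \<le> 1/4" by (simp add: power2_eq_square algebra_simps)
      have e0: "0 \<le> e" unfolding e_def using l c1 by simp
      have "e \<le> (1/4) * (1-c)" unfolding e_def using l4 c1 by (intro mult_right_mono) auto
      then have e1: "e < 1/2" using cne by (simp add: field_simps)
      have nw: "norm ?w \<le> 1 - e"
      proof -
        have a1: "(norm ?w)^2 \<le> (1-e)^2" using nw2 by (simp add: power2_eq_square algebra_simps)
        have a2: "0 \<le> 1 - e" using e1 by simp
        show ?thesis by (rule power2_le_imp_le[OF a1 a2])
      qed
      have sq: "(norm ?w)^2 > 0" using nw2 e1 by simp
      have "norm ?w \<noteq> 0"
      proof
        assume "norm ?w = 0" with sq show False by simp
      qed
      then have wpos: "norm ?w > 0" by simp
      then have w0: "?w \<noteq> 0" by auto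
      have "(1 / norm ?w) *\<^sub>R ?w \<in> K" using arc_in[OF sc v k _ _ w0] l by simp
      then have "inner x ((1 / norm ?w) *\<^sub>R ?w) \<le> X" using vmax unfolding X_def by blast
      then have "inner x ?w / norm ?w \<le> X" by simp
      then have "inner x ?w \<le> norm ?w * X" using wpos by (simp add: divide_le_eq mult.commute)
      also have "\<dots> \<le> (1 - e) * X" using nw X0 unfolding X_def by (simp add: mult_right_mono)
      finally have "(1-l) * X + l * inner x k \<le> (1-e) * X" by (simp add: inner_add_right X_def)
      then have "l * A \<le> l * (- E + l * E)"
        unfolding A_def E_def e_def by (simp add: algebra_simps)
      then show ?thesis using l by simp
    qed
    have "A \<le> -E" by (rule lim_aux[OF step E0])
    then show ?thesis unfolding A_def E_def X_def c_def by (simp add: algebra_simps)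
  qed
qed



lemma compact_K:
  fixes K :: "'a::euclidean_space set"
  assumes "K \<subseteq> sphere 0 1" "closed K" shows "compact K"
  using assms bounded_subset[OF bounded_sphere] compact_eq_bounded_closed by blast

lemma partA:
  fixes K :: "'a::euclidean_space set"
  assumes R: "R > 0" and Ks: "K \<subseteq> sphere 0 1" and Kc: "closed K" and sc: "sph_convex K"
    and a: "a \<in> Rcone R K" and xa: "dist a x < R"
  shows "x \<in> Unp (Rcone R K)"
proof (cases "x \<in> Rcone R K")
  case True
  show ?thesis unfolding Unp_def mem_Collect_eq
  proof (rule ex1I[of _ x])
    show "x \<in> Rcone R K \<and> (\<forall>b\<in>Rcone R K. dist x x \<le> dist x b)" using True by simp
    fix b assume "b \<in> Rcone R K \<and> (\<forall>b'\<in>Rcone R K. dist x b \<le> dist x b')"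
    then have "dist x b \<le> dist x x" using True by blast
    then show "b = x" by simp
  qed
next
  case False
  let ?C = "Rcone R K"
  obtain k0 where k0: "k0 \<in> K" "norm (x - R *\<^sub>R k0) < R" using False mem_Rcone' by (metis not_le)
  have cK: "compact K" using compact_K Ks Kc by blast
  have ctn: "continuous_on K (\<lambda>k. inner x k)" by (intro continuous_intros)
  have Kne: "K \<noteq> {}" using k0 by auto
  obtain v where v: "v \<in> K" "\<forall>k\<in>K. inner x k \<le> inner x v"
    using continuous_attains_sup[OF cK Kne ctn] by blast
  have nv: "norm v = 1" using Ks v by auto
  have nk0: "norm k0 = 1" using Ks k0 by auto
  define d where "d = norm (x - R *\<^sub>R v)"
  have dsq: "d^2 = (norm x)^2 - 2*R*inner x v + R^2" by (simp add: d_def nds nv power_mult_distrib)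
  have "(norm (x - R *\<^sub>R k0))^2 = (norm x)^2 - 2*R*inner x k0 + R^2"
    by (simp add: nds nk0 power_mult_distrib)
  moreover have "(norm (x - R *\<^sub>R k0))^2 < R^2" using k0 by (simp add: power_strict_mono)
  moreover have "R * inner x k0 \<le> R * inner x v" using v k0 R by simp
  ultimately have "d^2 < R^2" using dsq by linarith
  then have dR: "d < R" using R by (smt (verit) d_def norm_ge_zero power_mono)
  have d0: "d > 0"
  proof (rule ccontr)
    assume "\<not> d > 0"
    then have "x = R *\<^sub>R v" unfolding d_def by simp
    then have "R \<le> dist a x" using a v unfolding mem_Rcone' by (simp add: dist_norm)
    then show False using xa by simp
  qed
  have nxd: "norm x \<ge> R - d"
  proof -
    have "norm (R *\<^sub>R v) \<le> norm x + norm (x - R *\<^sub>R v)"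
      using norm_triangle_ineq4[of x "x - R *\<^sub>R v"] by simp
    then show ?thesis using nv R unfolding d_def by simp
  qed
  have X: "inner x v \<ge> R - d"
  proof -
    have "(R - d)^2 \<le> (norm x)^2" using nxd dR by (simp add: power_mono)
    then have "2*R*(R-d) \<le> 2*R*inner x v" using dsq by (simp add: power2_eq_square algebra_simps)
    then show ?thesis using R by simp
  qed
  define al where "al = R / d"
  have al1: "al > 1" unfolding al_def using d0 dR by simp
  have ald: "al * d = R" unfolding al_def using d0 by simp
  define p where "p = R *\<^sub>R v + al *\<^sub>R (x - R *\<^sub>R v)"
  have pv: "norm (p - R *\<^sub>R v) = R" unfolding p_def using al1 ald by (simp add: d_def)
  have pC: "p \<in> ?C"
    unfolding mem_Rcone[OF R Ks]
  proof
    fix k assume k: "k \<in> K"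
    have key: "inner x k - inner x v \<le> (inner v k - 1) * inner x v"
      using key_ineq[OF sc Ks v(1) k v(2)] X dR by simp
    have "R^2 = (norm p)^2 - 2 * R * inner p v + R^2"
      using pv nds[of p "R *\<^sub>R v"] nv by (simp add: power_mult_distrib)
    then have np: "(norm p)^2 = 2 * R * inner p v" by simp
    have c1: "inner v k \<le> 1" using norm_cauchy_schwarz[of v k] nv Ks k by auto
    have pk: "inner p k = R * inner v k + al * (inner x k - R * inner v k)"
      unfolding p_def by (simp add: inner_add_left inner_diff_left)
    have pvv: "inner p v = R + al * (inner x v - R)"
      unfolding p_def using nv by (simp add: inner_add_left inner_diff_left dot_square_norm)
    have h1: "al * (inner x k - inner x v) \<le> al * ((inner v k - 1) * inner x v)"
      using key al1 by simp
    have h2: "al * inner x v \<ge> R * (al - 1)"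
    proof -
      have "al * inner x v \<ge> al * (R - d)" using X al1 by simp
      also have "al * (R - d) = R * (al - 1)" using ald by (simp add: algebra_simps)
      finally show ?thesis .
    qed
    have h3: "(1 - inner v k) * (R * (al - 1)) \<le> (1 - inner v k) * (al * inner x v)"
      using h2 c1 by (intro mult_left_mono) auto
    have "inner p k \<le> inner p v"
      unfolding pk pvv using h1 h3 by (simp add: algebra_simps)
    then have "2 * R * inner p k \<le> 2 * R * inner p v" using R by simp
    then show "2 * R * inner p k \<le> (norm p)^2" using np by simp
  qed
  have xp: "x - p = (1 - al) *\<^sub>R (x - R *\<^sub>R v)" unfolding p_def by (simp add: algebra_simps)
  have dxp: "dist x p = R - d"
  proof -
    have "dist x p = norm ((1 - al) *\<^sub>R (x - R *\<^sub>R v))" unfolding dist_norm xp ..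
    also have "\<dots> = (al - 1) * d" using al1 by (simp add: d_def)
    also have "\<dots> = R - d" using ald by (simp add: algebra_simps)
    finally show ?thesis .
  qed
  have near: "\<forall>b\<in>?C. R - d \<le> dist x b"
  proof
    fix b assume b: "b \<in> ?C"
    have "R \<le> norm (b - R *\<^sub>R v)" using b v mem_Rcone' by blast
    also have "\<dots> \<le> norm (b - x) + norm (x - R *\<^sub>R v)"
      using norm_triangle_ineq[of "b - x" "x - R *\<^sub>R v"] by simp
    finally show "R - d \<le> dist x b" unfolding d_def by (simp add: dist_norm norm_minus_commute)
  qed
  show ?thesis unfolding Unp_def mem_Collect_eq
  proof (rule ex1I[of _ p])
    show "p \<in> ?C \<and> (\<forall>b\<in>?C. dist x p \<le> dist x b)" using pC near dxp by simp
    fix b assume b: "b \<in> ?C \<and> (\<forall>b'\<in>?C. dist x b \<le> dist x b')"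
    then have "dist x b \<le> R - d" using pC dxp by metis
    moreover have "R - d \<le> dist x b" using near b by blast
    ultimately have dxb: "norm (b - x) = R - d" by (simp add: dist_norm norm_minus_commute)
    have "R \<le> norm (b - R *\<^sub>R v)" using b v mem_Rcone' by blast
    moreover have "norm ((b - x) + (x - R *\<^sub>R v)) = norm (b - R *\<^sub>R v)" by simp
    moreover have "norm (b - x) + norm (x - R *\<^sub>R v) = R" using dxb unfolding d_def by simp
    ultimately have "norm ((b - x) + (x - R *\<^sub>R v)) \<ge> norm (b - x) + norm (x - R *\<^sub>R v)"
      by linarith
    then have "norm ((b - x) + (x - R *\<^sub>R v)) = norm (b - x) + norm (x - R *\<^sub>R v)"
      using norm_triangle_ineq[of "b - x" "x - R *\<^sub>R v"] by linarith
    then have "norm (b - x) *\<^sub>R (x - R *\<^sub>R v) = norm (x - R *\<^sub>R v) *\<^sub>R (b - x)"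
      using norm_triangle_eq by blast
    then have eq: "(R - d) *\<^sub>R (x - R *\<^sub>R v) = d *\<^sub>R (b - x)" using dxb d_def by simp
    have "b = x + (1/d) *\<^sub>R (d *\<^sub>R (b - x))" using d0 by simp
    also have "\<dots> = x + (1/d) *\<^sub>R ((R - d) *\<^sub>R (x - R *\<^sub>R v))" using eq by simp
    also have "\<dots> = x + (al - 1) *\<^sub>R (x - R *\<^sub>R v)"
      using d0 unfolding al_def by (simp add: diff_divide_distrib)
    also have "\<dots> = p" unfolding p_def by (simp add: algebra_simps)
    finally show "b = p" .
  qed
qed

lemma reach_geI:
  fixes A :: "'a::euclidean_space set"
  assumes "\<And>a x. a \<in> A \<Longrightarrow> dist a x < R \<Longrightarrow> x \<in> Unp A" "R > 0"
  shows "ereal R \<le> reach A"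
  unfolding reach_def reach_at_def
proof (rule INF_greatest)
  fix a assume a: "a \<in> A"
  have "R \<in> {\<rho>. \<rho> > 0 \<and> ball a \<rho> \<subseteq> Unp A}" using assms a by (auto simp: mem_ball)
  then show "ereal R \<le> (SUP \<rho>\<in>{\<rho>. \<rho> > 0 \<and> ball a \<rho> \<subseteq> Unp A}. ereal \<rho>)"
    by (rule SUP_upper)
qed

lemma reach_ltI:
  fixes A :: "'a::euclidean_space set"
  assumes "0 \<in> A" "x \<notin> Unp A" "norm x < R"
  shows "\<not> ereal R \<le> reach A"
proof -
  have "reach A \<le> reach_at A 0" unfolding reach_def using assms(1) by (rule INF_lower)
  also have "reach_at A 0 \<le> ereal (norm x)" unfolding reach_at_def
  proof (rule SUP_least)
    fix \<rho> assume "\<rho> \<in> {\<rho>. \<rho> > 0 \<and> ball 0 \<rho> \<subseteq> Unp A}"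
    then have "x \<notin> ball 0 \<rho>" using assms(2) by auto
    then show "ereal \<rho> \<le> ereal (norm x)" by (simp add: mem_ball)
  qed
  finally have "reach A \<le> ereal (norm x)" .
  moreover have "ereal (norm x) < ereal R" using assms(3) by simp
  ultimately show ?thesis by (meson not_le order_le_less_trans)
qed



lemma hull_cone:
  fixes K :: "'a::euclidean_space set"
  shows "convex hull (gen_cone K) \<subseteq> {t *\<^sub>R z | t z. t \<ge> 0 \<and> z \<in> convex hull K}"
proof (rule hull_minimal)
  show "gen_cone K \<subseteq> {t *\<^sub>R z | t z. t \<ge> 0 \<and> z \<in> convex hull K}"
    unfolding gen_cone_def using hull_inc by fastforce
  show "convex {t *\<^sub>R z | t z. t \<ge> 0 \<and> z \<in> convex hull K}"
  proof (rule convexI)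
    fix x y and u v :: real
    assume x: "x \<in> {t *\<^sub>R z | t z. t \<ge> 0 \<and> z \<in> convex hull K}"
      and y: "y \<in> {t *\<^sub>R z | t z. t \<ge> 0 \<and> z \<in> convex hull K}"
      and u: "0 \<le> u" and v: "0 \<le> v" and uv: "u + v = 1"
    obtain t1 z1 where 1: "x = t1 *\<^sub>R z1" "t1 \<ge> 0" "z1 \<in> convex hull K" using x by blast
    obtain t2 z2 where 2: "y = t2 *\<^sub>R z2" "t2 \<ge> 0" "z2 \<in> convex hull K" using y by blast
    define T where "T = u * t1 + v * t2"
    have T0: "T \<ge> 0" unfolding T_def using 1 2 u v by simp
    show "u *\<^sub>R x + v *\<^sub>R y \<in> {t *\<^sub>R z | t z. t \<ge> 0 \<and> z \<in> convex hull K}"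
    proof (cases "T = 0")
      case True
      then have "u * t1 = 0" "v * t2 = 0" unfolding T_def using 1 2 u v
        by (smt (verit) mult_nonneg_nonneg)+
      then have "u *\<^sub>R x + v *\<^sub>R y = 0 *\<^sub>R z1"
      proof -
        assume e: "u * t1 = 0" "v * t2 = 0"
        have "u *\<^sub>R x + v *\<^sub>R y = (u * t1) *\<^sub>R z1 + (v * t2) *\<^sub>R z2" using 1 2 by simp
        also have "\<dots> = 0 *\<^sub>R z1" by (simp only: e scaleR_zero_left add_0_left)
        finally show ?thesis .
      qed
      then show ?thesis using 1 by blast
    next
      case False
      then have Tp: "T > 0" using T0 by simp
      have "(u * t1 / T) *\<^sub>R z1 + (v * t2 / T) *\<^sub>R z2 \<in> convex hull K"
        using 1 2 u v Tp by (intro convexD[OF convex_convex_hull]) (auto simp: T_def add_divide_distrib[symmetric])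
      moreover have "u *\<^sub>R x + v *\<^sub>R y = T *\<^sub>R ((u * t1 / T) *\<^sub>R z1 + (v * t2 / T) *\<^sub>R z2)"
        using 1 2 Tp by (simp add: scaleR_add_right)
      ultimately show ?thesis using T0 by blast
    qed
  qed
qed

lemma partB:
  fixes K :: "'a::euclidean_space set"
  assumes R: "R > 0" and Ks: "K \<subseteq> sphere 0 1" and Kc: "closed K" and nsc: "\<not> sph_convex K"
  shows "\<exists>x. norm x < R \<and> x \<notin> Unp (Rcone R K)"
proof -
  let ?C = "Rcone R K"
  define M where "M = convex hull (insert 0 K)"
  have cM: "compact M" unfolding M_def using compact_convex_hull compact_K[OF Ks Kc] compact_insert by blast
  have clM: "closed M" using cM compact_imp_closed by blast
  have convM: "convex M" unfolding M_def by simp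
  have M0: "0 \<in> M" unfolding M_def by (simp add: hull_inc)
  have KM: "K \<subseteq> M" unfolding M_def by (meson hull_subset subset_insertI subset_trans)
  have Mball: "M \<subseteq> cball 0 1" unfolding M_def using Ks by (intro hull_minimal) auto
  have MC: "2 * R * inner y m \<le> (norm y)^2" if y: "y \<in> ?C" and m: "m \<in> M" for y m
  proof -
    have "insert 0 K \<subseteq> {m. inner ((2 * R) *\<^sub>R y) m \<le> (norm y)^2}"
      using y mem_Rcone[OF R Ks] by auto
    then have "M \<subseteq> {m. inner ((2 * R) *\<^sub>R y) m \<le> (norm y)^2}"
      unfolding M_def by (intro hull_minimal convex_halfspace_le)
    then show ?thesis using m by auto
  qed
  obtain u where u: "u \<in> co_sph K" "u \<notin> K" using nsc sub_co_sph[OF Ks] unfolding sph_convex_def by blast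
  have nu: "norm u = 1" and uH: "u \<in> convex hull gen_cone K" using u unfolding co_sph_def by auto
  obtain t z where tz: "u = t *\<^sub>R z" "t \<ge> 0" "z \<in> convex hull K" using hull_cone uH by blast
  have t0: "t > 0" using tz nu by (cases "t = 0") auto
  have zM: "z \<in> M" unfolding M_def using tz(3) hull_mono[of K "insert 0 K"] by blast
  have uM: "u \<notin> M" using hull_sphere[OF Ks] nu u(2) unfolding M_def by auto
  define L where "L = {0..1} \<inter> (\<lambda>s. s *\<^sub>R u) -` M"
  have "closed ((\<lambda>s. s *\<^sub>R u) -` M)"
    by (intro continuous_closed_vimage clM) (intro continuous_intros)
  then have cL: "compact L" unfolding L_def by (intro compact_Int_closed) auto
  have zu: "z = (1/t) *\<^sub>R u" using tz t0 by simp
  have "norm z \<le> 1" using zM Mball by auto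
  then have "1/t \<le> 1" using zu nu t0 by simp
  then have "1/t \<in> L" unfolding L_def using t0 zM zu by simp
  then have Lne: "L \<noteq> {}" by auto
  obtain s0 where s0: "s0 \<in> L" "\<forall>s\<in>L. s \<le> s0" using compact_attains_sup[OF cL Lne] by blast
  have s01: "0 \<le> s0" "s0 \<le> 1" "s0 *\<^sub>R u \<in> M" using s0 unfolding L_def by auto
  have s0l: "s0 < 1" using s01 uM by (cases "s0 = 1") auto
  define r where "r = s0 + (1 - s0)/3"
  have r: "s0 < r" "r < 1" "0 < r" using s0l s01 unfolding r_def by (auto simp: field_simps)
  define q where "q = r *\<^sub>R u"
  have qM: "q \<notin> M"
  proof
    assume "q \<in> M"
    then have "r \<in> L" unfolding L_def q_def using r by simp
    then show False using s0 r by auto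
  qed
  define pi where "pi = closest_point M q"
  have piM: "pi \<in> M" unfolding pi_def using closest_point_in_set[OF clM] M0 by auto
  have "dist q pi \<le> dist q (s0 *\<^sub>R u)" unfolding pi_def using closest_point_le[OF clM s01(3)] .
  also have "\<dots> = r - s0" unfolding q_def dist_norm using nu r
    by (simp add: scaleR_diff_left[symmetric])
  finally have dq: "dist q pi \<le> r - s0" .
  have nq: "norm q = r" unfolding q_def using nu r by simp
  have npi: "norm pi < 1"
  proof -
    have "norm pi \<le> norm q + dist q pi" using norm_triangle_ineq4[of q "q - pi"] by (simp add: dist_norm)
    then show ?thesis using dq nq s0l unfolding r_def by (simp add: field_simps)
  qed
  define a where "a = q - pi"
  have a0: "a \<noteq> 0" unfolding a_def using qM piM by auto
  have dot: "inner a y \<le> inner a pi" if "y \<in> M" for y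
    using closest_point_dot[OF convM clM that, of q] unfolding a_def pi_def
    by (simp add: inner_diff_right)
  define h where "h = inner a pi"
  have h0: "h \<ge> 0" using dot[OF M0] unfolding h_def by simp
  have hpos: "h > 0"
  proof (rule ccontr)
    assume "\<not> h > 0"
    then have h00: "h = 0" using h0 by simp
    have "inner a z \<le> 0" using dot[OF zM] h00 unfolding h_def by simp
    then have "inner a u \<le> 0" using tz t0 by (simp add: mult_nonneg_nonpos)
    moreover have "inner a u = r - inner pi u" unfolding a_def q_def using nu
      by (simp add: inner_diff_left dot_square_norm)
    ultimately have r1: "r \<le> inner pi u" by simp
    have "inner pi u \<le> norm pi" using norm_cauchy_schwarz[of pi u] nu by simp
    then have rp: "r \<le> norm pi" using r1 by simp
    have "inner q pi = inner pi pi" using h00 unfolding h_def a_def by (simp add: inner_diff_left)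
    then have "(norm a)^2 = r^2 - (norm pi)^2" unfolding a_def using nds[of q pi] nq
      by (simp add: power2_norm_eq_inner)
    moreover have "r^2 \<le> (norm pi)^2" using rp r by (simp add: power_mono)
    ultimately have "(norm a)^2 \<le> 0" by simp
    then show False using a0 by simp
  qed
  define x where "x = R *\<^sub>R pi"
  define c where "c = 2 * R * h / (norm a)^2"
  have na: "(norm a)^2 > 0" using a0 by simp
  have c0: "c > 0" unfolding c_def using R hpos na by simp
  have cna: "c * (norm a)^2 = 2 * R * h" unfolding c_def using na by simp
  define p where "p = c *\<^sub>R a"
  have "(norm p)^2 = c * (c * (norm a)^2)" unfolding p_def using c0
    by (simp add: power2_eq_square)
  then have np: "(norm p)^2 = 2 * R * c * h" using cna by simp
  have zC: "0 \<in> ?C" unfolding mem_Rcone[OF R Ks] by simp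
  have pC: "p \<in> ?C" unfolding mem_Rcone[OF R Ks]
  proof
    fix k assume k: "k \<in> K"
    have "inner a k \<le> h" using dot KM k unfolding h_def by auto
    then have "2 * R * c * inner a k \<le> 2 * R * c * h" using R c0 by simp
    then show "2 * R * inner p k \<le> (norm p)^2" using np unfolding p_def by (simp add: algebra_simps)
  qed
  have p0: "p \<noteq> 0" unfolding p_def using c0 a0 by simp
  have "(dist x p)^2 = (norm x)^2 - 2 * inner x p + (norm p)^2" unfolding dist_norm by (rule nds)
  also have "inner x p = R * c * h" unfolding x_def p_def h_def by (simp add: inner_commute)
  finally have "(dist x p)^2 = (norm x)^2" using np by simp
  then have dxp: "dist x p = norm x" by (simp add: power2_eq_iff_nonneg)
  have nearest: "norm x \<le> dist x y" if y: "y \<in> ?C" for y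
  proof -
    have "(dist x y)^2 = (norm x)^2 - 2 * R * inner pi y + (norm y)^2" unfolding dist_norm x_def
      using nds[of "R *\<^sub>R pi" y] by simp
    moreover have "2 * R * inner y pi \<le> (norm y)^2" using MC[OF y piM] .
    ultimately have "(norm x)^2 \<le> (dist x y)^2" by (simp add: inner_commute)
    then show ?thesis by (rule power2_le_imp_le) simp
  qed
  have "x \<notin> Unp ?C"
  proof
    assume "x \<in> Unp ?C"
    then obtain b where b: "\<And>b'. b' \<in> ?C \<and> (\<forall>b''\<in>?C. dist x b' \<le> dist x b'') \<Longrightarrow> b' = b"
      unfolding Unp_def by blast
    have "0 = b" using zC nearest by (intro b) simp
    moreover have "p = b" using pC nearest dxp by (intro b) simp
    ultimately show False using p0 by simp
  qed
  moreover have "norm x < R" unfolding x_def using R npi by simp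
  ultimately show ?thesis by blast
qed



lemma nonunp:
  fixes K :: "'a::euclidean_space set"
  assumes R: "R > 0" and Ks: "K \<subseteq> sphere 0 1"
    and piM: "pq \<in> convex hull (insert 0 K)"
    and dot: "\<And>y. y \<in> convex hull (insert 0 K) \<Longrightarrow> inner a y \<le> inner a pq"
    and hpos: "inner a pq > 0" and npi: "norm pq < 1"
  shows "norm (R *\<^sub>R pq) < R \<and> R *\<^sub>R pq \<notin> Unp (Rcone R K)"
proof -
  let ?C = "Rcone R K"
  define M where "M = convex hull (insert 0 K)"
  have KM: "K \<subseteq> M" unfolding M_def by (meson hull_subset subset_insertI subset_trans)
  have MC: "2 * R * inner y m \<le> (norm y)^2" if y: "y \<in> ?C" and m: "m \<in> M" for y m
  proof -
    have "insert 0 K \<subseteq> {m. inner ((2 * R) *\<^sub>R y) m \<le> (norm y)^2}"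
      using y mem_Rcone[OF R Ks] by auto
    then have "M \<subseteq> {m. inner ((2 * R) *\<^sub>R y) m \<le> (norm y)^2}"
      unfolding M_def by (intro hull_minimal convex_halfspace_le)
    then show ?thesis using m by auto
  qed
  define h where "h = inner a pq"
  have a0: "a \<noteq> 0" using hpos by auto
  define x where "x = R *\<^sub>R pq"
  define c where "c = 2 * R * h / (norm a)^2"
  have na: "(norm a)^2 > 0" using a0 by simp
  have c0: "c > 0" unfolding c_def h_def using R hpos na by simp
  have cna: "c * (norm a)^2 = 2 * R * h" unfolding c_def using na by simp
  define p where "p = c *\<^sub>R a"
  have "(norm p)^2 = c * (c * (norm a)^2)" unfolding p_def using c0
    by (simp add: power2_eq_square)
  then have np: "(norm p)^2 = 2 * R * c * h" using cna by simp
  have zC: "0 \<in> ?C" unfolding mem_Rcone[OF R Ks] by simp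
  have pC: "p \<in> ?C" unfolding mem_Rcone[OF R Ks]
  proof
    fix k assume k: "k \<in> K"
    have "inner a k \<le> h" using dot KM k unfolding h_def M_def by auto
    then have "2 * R * c * inner a k \<le> 2 * R * c * h" using R c0 by simp
    then show "2 * R * inner p k \<le> (norm p)^2" using np unfolding p_def by (simp add: algebra_simps)
  qed
  have p0: "p \<noteq> 0" unfolding p_def using c0 a0 by simp
  have "(dist x p)^2 = (norm x)^2 - 2 * inner x p + (norm p)^2" unfolding dist_norm by (rule nds)
  also have "inner x p = R * c * h" unfolding x_def p_def h_def by (simp add: inner_commute)
  finally have "(dist x p)^2 = (norm x)^2" using np by simp
  then have dxp: "dist x p = norm x" by (simp add: power2_eq_iff_nonneg)
  have nearest: "norm x \<le> dist x y" if y: "y \<in> ?C" for y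
  proof -
    have "(dist x y)^2 = (norm x)^2 - 2 * R * inner pq y + (norm y)^2" unfolding dist_norm x_def
      using nds[of "R *\<^sub>R pq" y] by simp
    moreover have "2 * R * inner y pq \<le> (norm y)^2" using MC[OF y] piM unfolding M_def by blast
    ultimately have "(norm x)^2 \<le> (dist x y)^2" by (simp add: inner_commute)
    then show ?thesis by (rule power2_le_imp_le) simp
  qed
  have "x \<notin> Unp ?C"
  proof
    assume "x \<in> Unp ?C"
    then obtain b where b: "\<And>b'. b' \<in> ?C \<and> (\<forall>b''\<in>?C. dist x b' \<le> dist x b'') \<Longrightarrow> b' = b"
      unfolding Unp_def by blast
    have "0 = b" using zC nearest by (intro b) simp
    moreover have "p = b" using pC nearest dxp by (intro b) simp
    ultimately show False using p0 by simp
  qed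
  moreover have "norm x < R" unfolding x_def using R npi by simp
  ultimately show ?thesis unfolding x_def by blast
qed

lemma Tan_sub:
  fixes K :: "'a::euclidean_space set"
  assumes R: "R > 0" and Ks: "K \<subseteq> sphere 0 1" and vT: "v \<in> Tan (Rcone R K) 0" and k: "k \<in> K"
  shows "inner v k \<le> 0"
proof (rule ccontr)
  assume "\<not> inner v k \<le> 0"
  then have eta: "inner v k > 0" by simp
  define e where "e = min 1 (min (inner v k / 2) (R * inner v k / (norm v + 1)))"
  have nv1: "norm v + 1 > 0" using norm_ge_zero[of v] by linarith
  have e0: "e > 0" unfolding e_def using eta R nv1 by (simp add: divide_pos_pos)
  obtain x r where x: "x \<in> Rcone R K" "norm x < e" and r: "r > 0" "norm (r *\<^sub>R x - v) < e"
    using vT e0 unfolding Tan_def by auto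
  have nk: "norm k = 1" using Ks k by auto
  have xk: "2 * R * inner x k \<le> (norm x)^2" using x(1) k mem_Rcone[OF R Ks] by blast
  have "2 * R * inner (r *\<^sub>R x) k \<le> r * (norm x)^2" using xk r by (simp add: mult.left_commute)
  also have "\<dots> = norm (r *\<^sub>R x) * norm x" using r by (simp add: power2_eq_square)
  also have "\<dots> \<le> (norm v + 1) * e"
  proof (rule mult_mono)
    have "norm (r *\<^sub>R x) \<le> norm v + norm (r *\<^sub>R x - v)" using norm_triangle_ineq2[of "r *\<^sub>R x" v] by simp
    then show "norm (r *\<^sub>R x) \<le> norm v + 1" using r(2) unfolding e_def by simp
  qed (use x in auto)
  also have "\<dots> \<le> R * inner v k"
  proof -
    have "e \<le> R * inner v k / (norm v + 1)" unfolding e_def by simp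
    then show ?thesis by (simp add: field_simps add_pos_nonneg)
  qed
  finally have "inner (r *\<^sub>R x) k \<le> inner v k / 2" using R by (simp add: field_simps)
  moreover have "inner (v - r *\<^sub>R x) k \<le> norm (v - r *\<^sub>R x) * norm k" by (rule norm_cauchy_schwarz)
  moreover have "norm (v - r *\<^sub>R x) < inner v k / 2"
    using r(2) unfolding e_def by (simp add: norm_minus_commute)
  ultimately show False using nk by (simp add: inner_diff_left field_simps)
qed

lemma Tan_sup:
  fixes K :: "'a::euclidean_space set"
  assumes R: "R > 0" and Ks: "K \<subseteq> sphere 0 1" and v: "\<forall>k\<in>K. inner v k \<le> 0"
  shows "v \<in> Tan (Rcone R K) 0"
  unfolding Tan_def
proof (intro CollectI allI impI)
  fix e :: real assume e: "e > 0"
  define t where "t = e / (2 * (norm v + 1))"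
  have nv1: "norm v + 1 > 0" using norm_ge_zero[of v] by linarith
  have t0: "t > 0" unfolding t_def using e nv1 by (intro divide_pos_pos) auto
  have xC: "t *\<^sub>R v \<in> Rcone R K" unfolding mem_Rcone[OF R Ks]
    using v t0 R by (auto intro: order_trans[OF _ zero_le_power2] simp: mult_nonneg_nonpos)
  have "norm (t *\<^sub>R v) < e"
  proof -
    have "norm (t *\<^sub>R v) = t * norm v" using t0 by simp
    also have "\<dots> \<le> t * (norm v + 1)" using t0 by simp
    also have "t * (norm v + 1) = e / 2" unfolding t_def using nv1 by (simp add: field_simps)
    finally show ?thesis using e by simp
  qed
  moreover have "norm ((1/t) *\<^sub>R (t *\<^sub>R v - 0) - v) < e" using t0 e by simp
  ultimately show "\<exists>x\<in>Rcone R K. norm (x - 0) < e \<and> (\<exists>r>0. norm (r *\<^sub>R (x - 0) - v) < e)"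
    using xC t0 by (intro bexI[of _ "t *\<^sub>R v"] conjI exI[of _ "1/t"]) auto
qed



lemma Nor_iff:
  fixes K :: "'a::euclidean_space set"
  assumes R: "R > 0" and Ks: "K \<subseteq> sphere 0 1"
  shows "u \<in> Nor (Rcone R K) 0 \<longleftrightarrow> (\<forall>v. (\<forall>k\<in>K. inner v k \<le> 0) \<longrightarrow> inner u v \<le> 0)"
  unfolding Nor_def using Tan_sub[OF R Ks] Tan_sup[OF R Ks] by blast

lemma partC1:
  fixes K :: "'a::euclidean_space set"
  assumes R: "R > 0" and Ks: "K \<subseteq> sphere 0 1" and Kc: "closed K" and sc: "sph_convex K"
  shows "Nor (Rcone R K) 0 \<inter> sphere 0 1 = K"
proof
  show "K \<subseteq> Nor (Rcone R K) 0 \<inter> sphere 0 1"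
  proof
    fix k assume k: "k \<in> K"
    have "k \<in> Nor (Rcone R K) 0" unfolding Nor_iff[OF R Ks] using k by (auto simp: inner_commute)
    then show "k \<in> Nor (Rcone R K) 0 \<inter> sphere 0 1" using Ks k by auto
  qed
  show "Nor (Rcone R K) 0 \<inter> sphere 0 1 \<subseteq> K"
  proof
    fix u assume u: "u \<in> Nor (Rcone R K) 0 \<inter> sphere 0 1"
    have nu: "norm u = 1" using u by simp
    have uN: "\<forall>v. (\<forall>k\<in>K. inner v k \<le> 0) \<longrightarrow> inner u v \<le> 0" using u Nor_iff[OF R Ks] by blast
    show "u \<in> K"
    proof (rule ccontr)
      assume uK: "u \<notin> K"
      define M where "M = convex hull (insert 0 K)"
      have cM: "compact M" unfolding M_def using compact_convex_hull compact_K[OF Ks Kc] compact_insert by blast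
      have clM: "closed M" using cM compact_imp_closed by blast
      have convM: "convex M" unfolding M_def by simp
      have M0: "0 \<in> M" unfolding M_def by (simp add: hull_inc)
      have KM: "K \<subseteq> M" unfolding M_def by (meson hull_subset subset_insertI subset_trans)
      have Mball: "M \<subseteq> cball 0 1" unfolding M_def using Ks by (intro hull_minimal) auto
      have uM: "u \<notin> M" using hull_sphere[OF Ks] nu uK unfolding M_def by auto
      define pq where "pq = closest_point M u"
      have pqM: "pq \<in> M" unfolding pq_def using closest_point_in_set[OF clM] M0 by auto
      define a where "a = u - pq"
      have a0: "a \<noteq> 0" unfolding a_def using uM pqM by auto
      have dot: "inner a y \<le> inner a pq" if "y \<in> M" for y
        using closest_point_dot[OF convM clM that, of u] unfolding a_def pq_def
        by (simp add: inner_diff_right)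
      define h where "h = inner a pq"
      have h0: "h \<ge> 0" using dot[OF M0] unfolding h_def by simp
      show False
      proof (cases "h > 0")
        case True
        show False
        proof (cases "norm pq < 1")
          case True
          have "norm (R *\<^sub>R pq) < R \<and> R *\<^sub>R pq \<notin> Unp (Rcone R K)"
            using nonunp[OF R Ks pqM[unfolded M_def], of a] dot \<open>h > 0\<close> True
            unfolding M_def h_def by blast
          moreover have "0 \<in> Rcone R K" unfolding mem_Rcone[OF R Ks] by simp
          ultimately show False using partA[OF R Ks Kc sc, of 0 "R *\<^sub>R pq"] by simp
        next
          case False
          then have "norm pq = 1" using pqM Mball by auto
          then have "pq \<in> K" using hull_sphere[OF Ks] pqM unfolding M_def by auto
          have "inner u pq \<le> 1" using norm_cauchy_schwarz[of u pq] nu \<open>norm pq = 1\<close> by simp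
          then have "h \<le> 0" unfolding h_def a_def using \<open>norm pq = 1\<close>
            by (simp add: inner_diff_left dot_square_norm)
          then show False using \<open>h > 0\<close> by simp
        qed
      next
        case False
        then have h00: "h = 0" using h0 by simp
        have "\<forall>k\<in>K. inner a k \<le> 0" using dot KM h00 unfolding h_def by auto
        then have "inner u a \<le> 0" using uN by blast
        moreover have "inner u a = (norm a)^2 + h" unfolding h_def
          by (simp add: a_def inner_diff_left inner_diff_right power2_norm_eq_inner inner_commute)
        ultimately show False using h00 a0 by simp
      qed
    qed
  qed
qed

lemma partC2:
  fixes K :: "'a::euclidean_space set"
  assumes R: "R > 0" and Ks: "K \<subseteq> sphere 0 1" and Kc: "closed K" and Kne: "K \<noteq> {}"
    and eq: "Rcone R K = Rcone R (Nor (Rcone R K) 0 \<inter> sphere 0 1)"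
  shows "sph_convex K"
proof -
  have "co_sph K \<subseteq> K"
  proof
    fix u assume u: "u \<in> co_sph K"
    have nu: "norm u = 1" and uH: "u \<in> convex hull gen_cone K" using u unfolding co_sph_def by auto
    have uN: "u \<in> Nor (Rcone R K) 0"
      unfolding Nor_iff[OF R Ks]
    proof (intro allI impI)
      fix v assume v: "\<forall>k\<in>K. inner v k \<le> 0"
      have "gen_cone K \<subseteq> {y. inner v y \<le> 0}" unfolding gen_cone_def
        using v by (auto simp: mult_nonneg_nonpos)
      then have "convex hull gen_cone K \<subseteq> {y. inner v y \<le> 0}"
        by (intro hull_minimal convex_halfspace_le)
      then show "inner u v \<le> 0" using uH by (auto simp: inner_commute)
    qed
    show "u \<in> K"
    proof (rule ccontr)
      assume uK: "u \<notin> K"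
      have cK: "compact K" using compact_K[OF Ks Kc] .
      have ctn: "continuous_on K (\<lambda>k. inner u k)" by (intro continuous_intros)
      obtain k0 where k0: "k0 \<in> K" "\<forall>k\<in>K. inner u k \<le> inner u k0"
        using continuous_attains_sup[OF cK Kne ctn] by blast
      have nk0: "norm k0 = 1" using Ks k0 by auto
      have le1: "inner u k0 \<le> 1" using norm_cauchy_schwarz[of u k0] nu nk0 by simp
      have lt1: "inner u k0 < 1"
      proof (rule ccontr)
        assume "\<not> inner u k0 < 1"
        then have "inner u k0 = 1" using le1 by simp
        then have "(norm (u - k0))^2 = 0" using nds[of u k0] nu nk0 by simp
        then have "u = k0" by simp
        then show False using uK k0 by simp
      qed
      define m where "m = max (inner u k0) 0"
      have m: "0 \<le> m" "m < 1" "inner u k0 \<le> m" unfolding m_def using lt1 by auto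
      define y where "y = (R * (1 + m)) *\<^sub>R u"
      have "y \<in> Rcone R K" unfolding mem_Rcone[OF R Ks]
      proof
        fix k assume k: "k \<in> K"
        have "2 * inner u k \<le> 1 + m" using k0 k m by fastforce
        then have ii: "(R * (R * (1 + m))) * (2 * inner u k) \<le> (R * (R * (1 + m))) * (1 + m)"
          using R m by (intro mult_left_mono) auto
        have iy: "inner y k = R * (1+m) * inner u k" unfolding y_def by simp
        have ny: "norm y = R * (1+m)" unfolding y_def using nu R m by simp
        show "2 * R * inner y k \<le> (norm y)^2" unfolding iy ny using ii
          by (simp add: power2_eq_square algebra_simps)
      qed
      moreover have "y \<notin> Rcone R (Nor (Rcone R K) 0 \<inter> sphere 0 1)"
      proof -
        have "y - R *\<^sub>R u = (R * m) *\<^sub>R u" unfolding y_def by (simp add: algebra_simps)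
        then have "norm (y - R *\<^sub>R u) = R * m" using nu R m by simp
        also have "\<dots> < R" using R m by simp
        finally have lt: "norm (y - R *\<^sub>R u) < R" .
        have "u \<in> Nor (Rcone R K) 0 \<inter> sphere 0 1" using uN nu by simp
        then show ?thesis unfolding mem_Rcone' using lt by (meson not_le)
      qed
      ultimately show False using eq by simp
    qed
  qed
  with sub_co_sph[OF Ks] show ?thesis unfolding sph_convex_def by blast
qed

theorem mainTheorem17:
  fixes R :: real and K :: "'a::euclidean_space set" and w :: 'a
  assumes "R > 0"
    and "K \<noteq> {}" and "closed K" and "K \<subseteq> sphere 0 1"
    and "w \<in> sphere 0 1" and "\<forall>v\<in>K. inner v w \<ge> 0"
  defines "N \<equiv> Nor (Rcone R K) 0 \<inter> sphere 0 1"
  shows "(sph_convex K \<longleftrightarrow> reach (Rcone R K) \<ge> ereal R)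
       \<and> (reach (Rcone R K) \<ge> ereal R \<longleftrightarrow> Rcone R K = Rcone R N)"
proof -
  have R: "R > 0" and Ks: "K \<subseteq> sphere 0 1" and Kc: "closed K" and Kne: "K \<noteq> {}" using assms by auto
  have ab: "sph_convex K \<longleftrightarrow> reach (Rcone R K) \<ge> ereal R"
  proof
    assume sc: "sph_convex K"
    show "reach (Rcone R K) \<ge> ereal R"
      by (rule reach_geI) (use partA[OF R Ks Kc sc] R in auto)
  next
    assume r: "reach (Rcone R K) \<ge> ereal R"
    show "sph_convex K"
    proof (rule ccontr)
      assume "\<not> sph_convex K"
      then obtain x where x: "norm x < R" "x \<notin> Unp (Rcone R K)" using partB[OF R Ks Kc] by blast
      have "0 \<in> Rcone R K" unfolding mem_Rcone[OF R Ks] by simp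
      then show False using reach_ltI[OF _ x(2) x(1)] r by blast
    qed
  qed
  have ac: "sph_convex K \<longleftrightarrow> Rcone R K = Rcone R N"
  proof
    assume sc: "sph_convex K"
    then show "Rcone R K = Rcone R N" unfolding N_def using partC1[OF R Ks Kc sc] by simp
  next
    assume "Rcone R K = Rcone R N"
    then show "sph_convex K" using partC2[OF R Ks Kc Kne] unfolding N_def by blast
  qed
  show ?thesis using ab ac by blast
qed

end
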